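(* For all $m,n \in \mathbb{N}_0$, all words $v \in \mathbb{W}_m$ and $w \in \mathbb{W}_{m+n}$, \[ \mathbb{P}\{U_{m+n}= w \mid U_m= v\} = \binom{w}{v} \frac{n!\,n!}{(2m+1)(2m+2)\cdots(2(m+n))}. \]
   Context: For $n \in \mathbb{N}_0$, $\mathbb{W}_n$ denotes the set of words over the alphabet $\{a,b\}$ with exactly $n$ letters $a$ and $n$ letters $b$, and $\mathbb{W} := \bigsqcup_{n} \mathbb{W}_n$. For words $w,v$, $\binom{w}{v}$ denotes the number of occurrences of $v$ as a (not necessarily contiguous) sub-word of $w$, i.e. the number of strictly increasing maps $g:\{1,\dots,|v|\}\to\{1,\dots,|w|\}$ with $w_{g(k)}=v_k$ for all $k$. The Markov chain $(U_n)_{n\in\mathbb{N}_0}$ on $\mathbb{W}$ starts at $U_0=\emptyset$ (the empty word); given $U_n \in \mathbb{W}_n$, first a letter $a$ is inserted uniformly at random into one of the $2n+1$ slots of $U_n$, then a letter $b$ is inserted uniformly at random into one of the $2n+2$ slots of the resulting word, giving $U_{n+1}$. Equivalently, for $v\in\mathbb{W}_m$, $w\in\mathbb{W}_{m+1}$, $\mathbb{P}\{U_{m+1}=w\mid U_m=v\}=\binom{w}{v}/((2m+2)(2m+1))$. *)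

theory Defs
  imports "HOL-Probability.Probability"
begin

datatype letter = A | B

type_synonym word = "letter list"

definition W :: "nat \<Rightarrow> word set" where
  "W n = {w. length (filter (\<lambda>x. x = A) w) = n \<and> length (filter (\<lambda>x. x = B) w) = n}"

text \<open>Number of occurrences of v as a (not necessarily contiguous) subword of w:
  number of strictly increasing maps g from positions of v to positions of w
  with matching letters (0-indexed; g is fixed to 0 outside the domain so that
  maps are counted as functions on the domain only).\<close>
definition subword_count :: "word \<Rightarrow> word \<Rightarrow> nat" where
  "subword_count w v = card {g :: nat \<Rightarrow> nat.
      (\<forall>k < length v. g k < length w \<and> w ! (g k) = v ! k) \<and>
      (\<forall>k. Suc k < length v \<longrightarrow> g k < g (Suc k)) \<and>
      (\<forall>k. length v \<le> k \<longrightarrow> g k = 0)}"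

definition ins :: "nat \<Rightarrow> letter \<Rightarrow> word \<Rightarrow> word" where
  "ins i x w = take i w @ x # drop i w"

definition step :: "word \<Rightarrow> word pmf" where
  "step w = bind_pmf (pmf_of_set {0..length w}) (\<lambda>i.
             let w' = ins i A w in
             map_pmf (\<lambda>j. ins j B w') (pmf_of_set {0..length w'}))"

definition trans :: "nat \<Rightarrow> word \<Rightarrow> word pmf" where
  "trans n v = ((\<lambda>p. bind_pmf p step) ^^ n) (return_pmf v)"

definition U :: "nat \<Rightarrow> word pmf" where
  "U n = trans n []"

definition joint :: "nat \<Rightarrow> nat \<Rightarrow> (word \<times> word) pmf" where
  "joint m n = bind_pmf (U m) (\<lambda>v. map_pmf (\<lambda>w. (v, w)) (trans n v))"

definition cond_prob :: "nat \<Rightarrow> nat \<Rightarrow> word \<Rightarrow> word \<Rightarrow> real" where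
  "cond_prob m n v w = pmf (joint m n) (v, w) / pmf (U m) v"

end

theory Submission
  imports Defs
begin


fun sc :: "word \<Rightarrow> word \<Rightarrow> nat" where
  "sc w [] = 1"
| "sc [] (y#v) = 0"
| "sc (x#w) (y#v) = sc w (y#v) + (if x = y then sc w v else 0)"

abbreviation nA :: "word \<Rightarrow> nat" where "nA w \<equiv> length (filter (\<lambda>x. x = A) w)"
abbreviation nB :: "word \<Rightarrow> nat" where "nB w \<equiv> length (filter (\<lambda>x. x = B) w)"

definition Wc :: "nat \<Rightarrow> nat \<Rightarrow> word set" where
  "Wc a b = {u. nA u = a \<and> nB u = b}"

lemma len_AB: "length w = nA w + nB w"
proof (induction w)
  case (Cons x w) then show ?case by (cases x) auto
qed simp

lemma finite_Wc: "finite (Wc a b)"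
proof -
  have "Wc a b \<subseteq> {xs. set xs \<subseteq> UNIV \<and> length xs = a + b}"
  proof
    fix u assume "u \<in> Wc a b"
    then show "u \<in> {xs. set xs \<subseteq> UNIV \<and> length xs = a + b}"
      using len_AB[of u] by (simp add: Wc_def)
  qed
  moreover have U: "(UNIV :: letter set) = {A, B}" using letter.exhaust by auto
  have "finite (UNIV :: letter set)" by (subst U) simp
  hence "finite {xs :: word. set xs \<subseteq> UNIV \<and> length xs = a + b}"
    by (intro finite_lists_length_eq)
  ultimately show ?thesis by (rule finite_subset)
qed

lemma W_Wc: "W n = Wc n n" unfolding W_def Wc_def by simp

lemma sc_Cons_left: "sc (x#w) u = sc w u + (case u of [] \<Rightarrow> 0 | y#r \<Rightarrow> if x = y then sc w r else 0)"
  by (cases u) auto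

lemma sc_short: "length w < length u \<Longrightarrow> sc w u = 0"
  by (induction w u rule: sc.induct) auto

lemma sc_same: "length w = length u \<Longrightarrow> sc w u = (if w = u then 1 else 0)"
  by (induction w u rule: sc.induct) (auto simp: sc_short)

lemma sc_counts: "sc w u \<noteq> 0 \<Longrightarrow> nA u \<le> nA w \<and> nB u \<le> nB w"
  by (induction w u rule: sc.induct) (auto split: if_splits)



lemma sum_cons:
  "(\<Sum>u'\<in>Wc a b. (case u' of [] \<Rightarrow> 0 | y#r \<Rightarrow> if y = x then g r else (0::nat))) =
   (if x = A then (if 0 < a then (\<Sum>r\<in>Wc (a-1) b. g r) else 0)
    else (if 0 < b then (\<Sum>r\<in>Wc a (b-1). g r) else 0))"
proof -
  let ?h = "\<lambda>u'. (case u' of [] \<Rightarrow> 0 | y#r \<Rightarrow> if y = x then g r else (0::nat))"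
  show ?thesis
  proof (cases x)
    case A
    show ?thesis
    proof (cases "0 < a")
      case True
      have "sum ?h (Wc a b) = sum ?h (Cons A ` Wc (a-1) b)"
        using True A by (intro sum.mono_neutral_right finite_Wc) (auto simp: Wc_def split: list.splits)
      also have "\<dots> = (\<Sum>r\<in>Wc (a-1) b. g r)"
        using A by (subst sum.reindex) auto
      finally show ?thesis using A True by simp
    next
      case False
      have "sum ?h (Wc a b) = 0" using False A by (intro sum.neutral) (auto simp: Wc_def split: list.splits)
      then show ?thesis using A False by simp
    qed
  next
    case B
    show ?thesis
    proof (cases "0 < b")
      case True
      have "sum ?h (Wc a b) = sum ?h (Cons B ` Wc a (b-1))"
        using True B by (intro sum.mono_neutral_right finite_Wc) (auto simp: Wc_def split: list.splits)
      also have "\<dots> = (\<Sum>r\<in>Wc a (b-1). g r)"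
        using B by (subst sum.reindex) auto
      finally show ?thesis using B True by simp
    next
      case False
      have "sum ?h (Wc a b) = 0" using False B by (intro sum.neutral) (auto simp: Wc_def split: list.splits)
      then show ?thesis using B False by simp
    qed
  qed
qed

lemma T_zeroA: "a < nA u \<Longrightarrow> (\<Sum>u'\<in>Wc a b. sc w u' * sc u' u) = 0"
proof (intro sum.neutral ballI)
  fix x assume "a < nA u" "x \<in> Wc a b"
  then show "sc w x * sc x u = 0" using sc_counts[of x u] by (auto simp: Wc_def)
qed
lemma T_zeroB: "b < nB u \<Longrightarrow> (\<Sum>u'\<in>Wc a b. sc w u' * sc u' u) = 0"
proof (intro sum.neutral ballI)
  fix x assume "b < nB u" "x \<in> Wc a b"
  then show "sc w x * sc x u = 0" using sc_counts[of x u] by (auto simp: Wc_def)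
qed

lemma split_prod:
  "sc (x#w) u' * sc u' u = sc w u' * sc u' u +
     (case u' of [] \<Rightarrow> 0 | y#r \<Rightarrow> if y = x then sc w r * sc (x#r) u else 0)"
  by (cases u') (auto simp: algebra_simps)

lemma pascal: "i > 0 \<Longrightarrow> (p choose i) + (p choose (i - 1)) = (Suc p choose i)"
  by (cases i) auto

lemma CI:
  "(\<Sum>u'\<in>Wc (nA u + i) (nB u + j). sc w u' * sc u' u)
     = sc w u * (nA w - nA u choose i) * (nB w - nB u choose j)"
proof (induction w arbitrary: u i j)
  case Nil
  have "(\<Sum>u'\<in>Wc (nA u + i) (nB u + j). sc [] u' * sc u' u)
       = (\<Sum>u'\<in>Wc (nA u + i) (nB u + j). if u' = [] then sc [] u else 0)"
    by (intro sum.cong) (auto simp: neq_Nil_conv)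
  also have "\<dots> = (if [] \<in> Wc (nA u + i) (nB u + j) then sc [] u else 0)"
    using finite_Wc by (simp add: sum.delta)
  finally show ?case by (cases u) (auto simp: Wc_def)
next
  case (Cons x w)
  let ?T = "\<lambda>w u a b. (\<Sum>u'\<in>Wc a b. sc w u' * sc u' u)"
  have dec: "?T (x#w) u a b = ?T w u a b +
       (\<Sum>u'\<in>Wc a b. (case u' of [] \<Rightarrow> 0 | y#r \<Rightarrow> if y = x then sc w r * sc (x#r) u else 0))" for a b
    by (simp add: split_prod sum.distrib)
  have dec2: "(\<Sum>r\<in>Wc a b. sc w r * sc (x#r) u) = ?T w u a b +
      (case u of [] \<Rightarrow> 0 | z#u0 \<Rightarrow> if x = z then ?T w u0 a b else 0)" for a b
    by (cases u) (auto simp: sum.distrib algebra_simps sum_distrib_left)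
  have IH: "\<And>u i j. ?T w u (nA u + i) (nB u + j) = sc w u * (nA w - nA u choose i) * (nB w - nB u choose j)"
    by (rule Cons.IH)
  show ?case
  proof (cases x)
    case A
    let ?a = "nA u + i" and ?b = "nB u + j"
    have S1: "?T w u (?a - 1) ?b = (if i > 0 then sc w u * (nA w - nA u choose (i - 1)) * (nB w - nB u choose j) else 0)" if pos: "0 < ?a"
    proof (cases "i > 0")
      case True
      then have "?a - 1 = nA u + (i - 1)" by simp
      then show ?thesis using IH[of u "i - 1" j] True by simp
    next
      case False
      show ?thesis using False pos by (auto intro!: T_zeroA)
    qed
    have S2: "(case u of [] \<Rightarrow> 0 | z#u0 \<Rightarrow> if x = z then ?T w u0 (?a - 1) ?b else 0)
       = (case u of [] \<Rightarrow> 0 | z#u0 \<Rightarrow> if x = z then sc w u0 * (nA w - nA u0 choose i) * (nB w - nB u0 choose j) else 0)"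
      using A IH by (cases u) auto
    have L: "?T (x#w) u ?a ?b = ?T w u ?a ?b + (if 0 < ?a then ?T w u (?a - 1) ?b +
      (case u of [] \<Rightarrow> 0 | z#u0 \<Rightarrow> if x = z then ?T w u0 (?a - 1) ?b else 0) else 0)"
    proof -
      have "?T (x#w) u ?a ?b = ?T w u ?a ?b +
       (\<Sum>u'\<in>Wc ?a ?b. (case u' of [] \<Rightarrow> 0 | y#r \<Rightarrow> if y = x then sc w r * sc (x#r) u else 0))"
        by (rule dec)
      also have "(\<Sum>u'\<in>Wc ?a ?b. (case u' of [] \<Rightarrow> 0 | y#r \<Rightarrow> if y = x then sc w r * sc (x#r) u else 0))
         = (if 0 < ?a then (\<Sum>r\<in>Wc (?a - 1) ?b. sc w r * sc (x#r) u) else 0)"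
        using sum_cons[where a="nA u + i" and b="nB u + j" and x=x and g="\<lambda>r. sc w r * sc (x#r) u"] A by simp
      also have "\<dots> = (if 0 < ?a then ?T w u (?a - 1) ?b +
      (case u of [] \<Rightarrow> 0 | z#u0 \<Rightarrow> if x = z then ?T w u0 (?a - 1) ?b else 0) else 0)"
        by (subst dec2) (rule refl)
      finally show ?thesis .
    qed
    have R: "sc (x#w) u = sc w u + (case u of [] \<Rightarrow> 0 | z#u0 \<Rightarrow> if x = z then sc w u0 else 0)"
      by (rule sc_Cons_left)
    have pasK: "sc w u * ((nA w - nA u) choose i) * (nB w - nB u choose j) +
         (if i > 0 then sc w u * ((nA w - nA u) choose (i - 1)) * (nB w - nB u choose j) else 0)
         = sc w u * ((nA (x#w) - nA u) choose i) * (nB w - nB u choose j)"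
    proof (cases "sc w u = 0")
      case True then show ?thesis by simp
    next
      case False
      then have le: "nA u \<le> nA w" using sc_counts by blast
      have e1: "(nA (x#w) - nA u) = Suc (nA w - nA u)" using le A by simp
      show ?thesis
      proof (cases "i > 0")
        case True
        have "sc w u * (Suc (nA w - nA u) choose i) * (nB w - nB u choose j) =
          sc w u * ((((nA w - nA u) choose i) + ((nA w - nA u) choose (i - 1)))) * (nB w - nB u choose j)"
          using pascal[OF True, of "(nA w - nA u)"] by simp
        then show ?thesis using True by (simp only: e1 distrib_left distrib_right if_True)
      next
        case False then show ?thesis by simp
      qed
    qed
    have e2: "nB (x#w) - nB u = nB w - nB u" using A by simp
    have X: "(if 0 < ?a then ?T w u (?a - 1) ?b else 0) = (if i > 0 then sc w u * ((nA w - nA u) choose (i - 1)) * (nB w - nB u choose j) else 0)"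
      using S1 by (cases "0 < ?a") auto
    show ?thesis
    proof (cases "\<exists>u0. u = A#u0")
      case False
      have scx: "sc (x#w) u = sc w u" using False A by (cases u) auto
      have "?T (x#w) u ?a ?b = ?T w u ?a ?b + (if 0 < ?a then ?T w u (?a - 1) ?b else 0)"
        using L False A by (cases u) (auto split: if_splits)
      also have "\<dots> = sc w u * ((nA (x#w) - nA u) choose i) * (nB w - nB u choose j)"
        by (simp only: IH X pasK)
      finally show ?thesis using scx e2 by simp
    next
      case True
      then obtain u0 where Cu: "u = A#u0" by blast
      have pos: "0 < ?a" using Cu by simp
      have k0: "nA w - nA u0 = (nA (x#w) - nA u)" using Cu A by simp
      have o0: "nB w - nB u0 = nB w - nB u" using Cu A by simp
      have scx: "sc (x#w) u = sc w u + sc w u0" using Cu A by simp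
      have S2': "?T w u0 (?a - 1) ?b = sc w u0 * (nA w - nA u0 choose i) * (nB w - nB u0 choose j)"
        using S2 by (simp only: Cu A list.case simp_thms if_True)
      have "?T (x#w) u ?a ?b = ?T w u ?a ?b + (?T w u (?a - 1) ?b + ?T w u0 (?a - 1) ?b)"
        using L pos Cu A by simp
      also have "\<dots> = ?T w u ?a ?b + ((if 0 < ?a then ?T w u (?a - 1) ?b else 0) + sc w u0 * ((nA (x#w) - nA u) choose i) * (nB w - nB u choose j))"
        by (simp only: S2' k0 o0 if_P[OF pos] if_True)
      also have "\<dots> = sc w u * ((nA (x#w) - nA u) choose i) * (nB w - nB u choose j) + sc w u0 * ((nA (x#w) - nA u) choose i) * (nB w - nB u choose j)"
        by (simp only: IH X pasK add.assoc[symmetric])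
      also have "\<dots> = sc (x#w) u * ((nA (x#w) - nA u) choose i) * (nB w - nB u choose j)"
        using scx by (simp add: distrib_right)
      finally show ?thesis using e2 by simp
    qed
  next
    case B
    let ?a = "nA u + i" and ?b = "nB u + j"
    have S1: "?T w u ?a (?b - 1) = (if j > 0 then sc w u * (nA w - nA u choose i) * (nB w - nB u choose (j - 1)) else 0)" if pos: "0 < ?b"
    proof (cases "j > 0")
      case True
      then have "?b - 1 = nB u + (j - 1)" by simp
      then show ?thesis using IH[of u i "j - 1"] True by simp
    next
      case False
      show ?thesis using False pos by (auto intro!: T_zeroB)
    qed
    have S2: "(case u of [] \<Rightarrow> 0 | z#u0 \<Rightarrow> if x = z then ?T w u0 ?a (?b - 1) else 0)
       = (case u of [] \<Rightarrow> 0 | z#u0 \<Rightarrow> if x = z then sc w u0 * (nA w - nA u0 choose i) * (nB w - nB u0 choose j) else 0)"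
      using B IH by (cases u) auto
    have L: "?T (x#w) u ?a ?b = ?T w u ?a ?b + (if 0 < ?b then ?T w u ?a (?b - 1) +
      (case u of [] \<Rightarrow> 0 | z#u0 \<Rightarrow> if x = z then ?T w u0 ?a (?b - 1) else 0) else 0)"
    proof -
      have "?T (x#w) u ?a ?b = ?T w u ?a ?b +
       (\<Sum>u'\<in>Wc ?a ?b. (case u' of [] \<Rightarrow> 0 | y#r \<Rightarrow> if y = x then sc w r * sc (x#r) u else 0))"
        by (rule dec)
      also have "(\<Sum>u'\<in>Wc ?a ?b. (case u' of [] \<Rightarrow> 0 | y#r \<Rightarrow> if y = x then sc w r * sc (x#r) u else 0))
         = (if 0 < ?b then (\<Sum>r\<in>Wc ?a (?b - 1). sc w r * sc (x#r) u) else 0)"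
        using sum_cons[where a="nA u + i" and b="nB u + j" and x=x and g="\<lambda>r. sc w r * sc (x#r) u"] B by simp
      also have "\<dots> = (if 0 < ?b then ?T w u ?a (?b - 1) +
      (case u of [] \<Rightarrow> 0 | z#u0 \<Rightarrow> if x = z then ?T w u0 ?a (?b - 1) else 0) else 0)"
        by (subst dec2) (rule refl)
      finally show ?thesis .
    qed
    have R: "sc (x#w) u = sc w u + (case u of [] \<Rightarrow> 0 | z#u0 \<Rightarrow> if x = z then sc w u0 else 0)"
      by (rule sc_Cons_left)
    have pasK: "sc w u * (nA w - nA u choose i) * ((nB w - nB u) choose j) +
         (if j > 0 then sc w u * (nA w - nA u choose i) * ((nB w - nB u) choose (j - 1)) else 0)
         = sc w u * (nA w - nA u choose i) * ((nB (x#w) - nB u) choose j)"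
    proof (cases "sc w u = 0")
      case True then show ?thesis by simp
    next
      case False
      then have le: "nB u \<le> nB w" using sc_counts by blast
      have e1: "(nB (x#w) - nB u) = Suc (nB w - nB u)" using le B by simp
      show ?thesis
      proof (cases "j > 0")
        case True
        have "sc w u * (nA w - nA u choose i) * (Suc (nB w - nB u) choose j) =
          sc w u * (nA w - nA u choose i) * ((((nB w - nB u) choose j) + ((nB w - nB u) choose (j - 1))))"
          using pascal[OF True, of "(nB w - nB u)"] by simp
        then show ?thesis using True by (simp only: e1 distrib_left distrib_right if_True)
      next
        case False then show ?thesis by simp
      qed
    qed
    have e2: "nA (x#w) - nA u = nA w - nA u" using B by simp
    have X: "(if 0 < ?b then ?T w u ?a (?b - 1) else 0) = (if j > 0 then sc w u * (nA w - nA u choose i) * ((nB w - nB u) choose (j - 1)) else 0)"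
      using S1 by (cases "0 < ?b") auto
    show ?thesis
    proof (cases "\<exists>u0. u = B#u0")
      case False
      have scx: "sc (x#w) u = sc w u" using False B by (cases u) auto
      have "?T (x#w) u ?a ?b = ?T w u ?a ?b + (if 0 < ?b then ?T w u ?a (?b - 1) else 0)"
        using L False B by (cases u) (auto split: if_splits)
      also have "\<dots> = sc w u * (nA w - nA u choose i) * ((nB (x#w) - nB u) choose j)"
        by (simp only: IH X pasK)
      finally show ?thesis using scx e2 by simp
    next
      case True
      then obtain u0 where Cu: "u = B#u0" by blast
      have pos: "0 < ?b" using Cu by simp
      have k0: "nB w - nB u0 = (nB (x#w) - nB u)" using Cu B by simp
      have o0: "nA w - nA u0 = nA w - nA u" using Cu B by simp
      have scx: "sc (x#w) u = sc w u + sc w u0" using Cu B by simp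
      have S2': "?T w u0 ?a (?b - 1) = sc w u0 * (nA w - nA u0 choose i) * (nB w - nB u0 choose j)"
        using S2 by (simp only: Cu B list.case simp_thms if_True)
      have "?T (x#w) u ?a ?b = ?T w u ?a ?b + (?T w u ?a (?b - 1) + ?T w u0 ?a (?b - 1))"
        using L pos Cu B by simp
      also have "\<dots> = ?T w u ?a ?b + ((if 0 < ?b then ?T w u ?a (?b - 1) else 0) + sc w u0 * (nA w - nA u choose i) * ((nB (x#w) - nB u) choose j))"
        by (simp only: S2' k0 o0 if_P[OF pos] if_True)
      also have "\<dots> = sc w u * (nA w - nA u choose i) * ((nB (x#w) - nB u) choose j) + sc w u0 * (nA w - nA u choose i) * ((nB (x#w) - nB u) choose j)"
        by (simp only: IH X pasK add.assoc[symmetric])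
      also have "\<dots> = sc (x#w) u * (nA w - nA u choose i) * ((nB (x#w) - nB u) choose j)"
        using scx by (simp add: distrib_right)
      finally show ?thesis using e2 by simp
    qed
  qed
qed



lemma count_ins: "length (filter P (ins i x u)) = length (filter P u) + (if P x then 1 else 0)"
proof -
  have "filter P u = filter P (take i u) @ filter P (drop i u)"
    by (simp flip: filter_append)
  then show ?thesis by (simp add: ins_def)
qed

lemma length_ins: "i \<le> length u \<Longrightarrow> length (ins i x u) = Suc (length u)"
  by (simp add: ins_def)

lemma ins_0: "ins 0 x u = x # u" by (simp add: ins_def)
lemma ins_Suc: "ins (Suc i) x (y # u) = y # ins i x u" by (simp add: ins_def)

lemma card_split:
  "card {i \<in> {0..Suc n}. P i} = (if P 0 then 1 else 0) + card {i \<in> {0..n}. P (Suc i)}"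
proof -
  have e: "{i \<in> {0..Suc n}. P i} = {i::nat. i = 0 \<and> P 0} \<union> Suc ` {i \<in> {0..n}. P (Suc i)}"
  proof (intro set_eqI iffI)
    fix x assume "x \<in> {i \<in> {0..Suc n}. P i}"
    then show "x \<in> {i::nat. i = 0 \<and> P 0} \<union> Suc ` {i \<in> {0..n}. P (Suc i)}"
      by (cases x) auto
  qed auto
  have "card ({i::nat. i = 0 \<and> P 0} \<union> Suc ` {i \<in> {0..n}. P (Suc i)})
      = card {i::nat. i = 0 \<and> P 0} + card (Suc ` {i \<in> {0..n}. P (Suc i)})"
    by (rule card_Un_disjoint) auto
  also have "card (Suc ` {i \<in> {0..n}. P (Suc i)}) = card {i \<in> {0..n}. P (Suc i)}"
    by (intro card_image) auto
  also have "card {i::nat. i = 0 \<and> P 0} = (if P 0 then 1 else 0)" by auto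
  finally show ?thesis using e by simp
qed

lemma N_sc:
  assumes "nA w = nA u + (if x = A then 1 else 0)" "nB w = nB u + (if x = B then 1 else 0)"
  shows "card {i \<in> {0..length u}. ins i x u = w} = sc w u"
  using assms
proof (induction u arbitrary: w)
  case Nil
  have lw: "length w = 1" using len_AB[of w] Nil by (cases x) auto
  then obtain z where wz: "w = [z]" by (cases w) auto
  have "z = x" using Nil wz by (cases x; cases z) auto
  then have "{i \<in> {0..length []}. ins i x [] = w} = {0}" using wz by (auto simp: ins_def)
  then show ?case by simp
next
  case (Cons y u0)
  have lw: "length w = Suc (Suc (length u0))"
    using len_AB[of w] len_AB[of "y#u0"] Cons.prems by (cases x) auto
  then obtain z w' where wz: "w = z # w'" by (cases w) auto
  have lw': "length w' = length (y#u0)" using lw wz by simp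
  have c1: "card {i \<in> {0..length (y#u0)}. ins i x (y#u0) = w}
      = (if x # y # u0 = w then 1 else 0) + card {i \<in> {0..length u0}. y # ins i x u0 = w}"
    using card_split[of "length u0" "\<lambda>i. ins i x (y#u0) = w"] by (simp add: ins_0 ins_Suc)
  have c2: "card {i \<in> {0..length u0}. y # ins i x u0 = w} = (if z = y then sc w' u0 else 0)"
  proof (cases "z = y")
    case True
    have "card {i \<in> {0..length u0}. y # ins i x u0 = w} = card {i \<in> {0..length u0}. ins i x u0 = w'}"
      using wz True by simp
    also have "\<dots> = sc w' u0"
    proof (rule Cons.IH)
      have p1: "nA (y#w') = nA (y#u0) + (if x = A then 1 else 0)" "nB (y#w') = nB (y#u0) + (if x = B then 1 else 0)"
        using Cons.prems wz True by simp_all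
      show "nA w' = nA u0 + (if x = A then 1 else 0)" using p1(1) by (cases y) auto
      show "nB w' = nB u0 + (if x = B then 1 else 0)" using p1(2) by (cases y) auto
    qed
    finally show ?thesis using True by simp
  next
    case False then show ?thesis using wz by simp
  qed
  have s1: "sc w' (y#u0) = (if w' = y#u0 then 1 else 0)" using sc_same[OF lw'] .
  have zx: "w' = y#u0 \<Longrightarrow> z = x" using Cons.prems wz by (cases x; cases z) auto
  show ?case using c1 c2 s1 zx wz by auto
qed

lemma pmf_map_pmf_of_set_card:
  assumes "finite S" "S \<noteq> {}"
  shows "pmf (map_pmf g (pmf_of_set S)) w = card {j \<in> S. g j = w} / card S"
proof -
  have "pmf (map_pmf g (pmf_of_set S)) w = measure (pmf_of_set S) (g -` {w})" by (rule pmf_map)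
  also have "\<dots> = card (S \<inter> g -` {w}) / card S" using assms by (simp add: measure_pmf_of_set)
  also have "S \<inter> g -` {w} = {j \<in> S. g j = w}" by auto
  finally show ?thesis .
qed

lemma pmf_step:
  assumes "nA w = nA u + 1" "nB w = nB u + 1"
  shows "pmf (step u) w = sc w u / ((length u + 1) * (length u + 2))"
proof -
  let ?L = "length u"
  have "pmf (step u) w = (\<Sum>i\<in>{0..?L}. pmf (map_pmf (\<lambda>j. ins j B (ins i A u)) (pmf_of_set {0..length (ins i A u)})) w) / real (card {0..?L})"
    unfolding step_def Let_def by (rule pmf_bind_pmf_of_set) auto
  also have "\<dots> = (\<Sum>i\<in>{0..?L}. real (sc w (ins i A u)) / (?L + 2)) / (?L + 1)"
  proof -
    have "pmf (map_pmf (\<lambda>j. ins j B (ins i A u)) (pmf_of_set {0..length (ins i A u)})) w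
        = real (sc w (ins i A u)) / (?L + 2)" if "i \<in> {0..?L}" for i
    proof -
      have li: "length (ins i A u) = Suc ?L" using that by (simp add: length_ins)
      have "pmf (map_pmf (\<lambda>j. ins j B (ins i A u)) (pmf_of_set {0..length (ins i A u)})) w
          = card {j \<in> {0..length (ins i A u)}. ins j B (ins i A u) = w} / card {0..length (ins i A u)}"
        by (rule pmf_map_pmf_of_set_card) auto
      also have "card {j \<in> {0..length (ins i A u)}. ins j B (ins i A u) = w} = sc w (ins i A u)"
        using assms by (intro N_sc) (auto simp: count_ins)
      finally show ?thesis using li by simp
    qed
    then have "(\<Sum>i\<in>{0..?L}. pmf (map_pmf (\<lambda>j. ins j B (ins i A u)) (pmf_of_set {0..length (ins i A u)})) w)
       = (\<Sum>i\<in>{0..?L}. real (sc w (ins i A u)) / (?L + 2))" by (rule sum.cong[OF refl])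
    then show ?thesis by simp
  qed
  also have "\<dots> = real (\<Sum>i\<in>{0..?L}. sc w (ins i A u)) / ((?L + 1) * (?L + 2))"
    by (simp add: sum_divide_distrib[symmetric] field_simps)
  also have "(\<Sum>i\<in>{0..?L}. sc w (ins i A u)) = sc w u"
  proof -
    have sub: "(\<lambda>i. ins i A u) ` {0..?L} \<subseteq> Wc (nA u + 1) (nB u + 0)"
      by (auto simp: Wc_def count_ins)
    have "(\<Sum>i\<in>{0..?L}. sc w (ins i A u)) =
        (\<Sum>y\<in>Wc (nA u + 1) (nB u + 0). \<Sum>i\<in>{i \<in> {0..?L}. ins i A u = y}. sc w (ins i A u))"
      by (rule sum.group[symmetric]) (use sub finite_Wc in auto)
    also have "\<dots> = (\<Sum>y\<in>Wc (nA u + 1) (nB u + 0). sc w y * sc y u)"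
    proof (rule sum.cong[OF refl])
      fix y assume "y \<in> Wc (nA u + 1) (nB u + 0)"
      then have cy: "card {i \<in> {0..?L}. ins i A u = y} = sc y u"
        by (intro N_sc) (auto simp: Wc_def)
      have "(\<Sum>i\<in>{i \<in> {0..?L}. ins i A u = y}. sc w (ins i A u)) = (\<Sum>i\<in>{i \<in> {0..?L}. ins i A u = y}. sc w y)"
        by (rule sum.cong) auto
      also have "\<dots> = sc w y * sc y u" using cy by simp
      finally show "(\<Sum>i\<in>{i \<in> {0..?L}. ins i A u = y}. sc w (ins i A u)) = sc w y * sc y u" .
    qed
    also have "\<dots> = sc w u * (nA w - nA u choose 1) * (nB w - nB u choose 0)" by (rule CI)
    also have "\<dots> = sc w u" using assms by simp
    finally show ?thesis .
  qed
  finally show ?thesis by simp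
qed



lemma trans_Suc: "trans (Suc n) v = bind_pmf (trans n v) step"
  by (simp add: trans_def)

lemma trans_0: "trans 0 v = return_pmf v"
  by (simp add: trans_def)

lemma set_pmf_step: assumes "u \<in> W k" shows "set_pmf (step u) \<subseteq> W (Suc k)"
proof
  fix w assume "w \<in> set_pmf (step u)"
  then obtain i j where ij: "i \<in> {0..length u}" "j \<in> {0..length (ins i A u)}" "w = ins j B (ins i A u)"
    unfolding step_def Let_def by (auto simp: set_pmf_of_set)
  then show "w \<in> W (Suc k)" using assms by (auto simp: W_def count_ins)
qed

lemma set_trans: assumes "v \<in> W m" shows "set_pmf (trans n v) \<subseteq> W (m + n)"
proof (induction n)
  case 0 then show ?case using assms by (simp add: trans_0)
next
  case (Suc n)
  show ?case
  proof
    fix w assume "w \<in> set_pmf (trans (Suc n) v)"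
    then obtain u where u: "u \<in> set_pmf (trans n v)" "w \<in> set_pmf (step u)"
      by (auto simp: trans_Suc)
    then have "u \<in> W (m + n)" using Suc.IH by blast
    then show "w \<in> W (m + Suc n)" using set_pmf_step u(2) by auto
  qed
qed

definition PP :: "nat \<Rightarrow> nat \<Rightarrow> real" where
  "PP m n = (\<Prod>k = 2*m+1..2*(m+n). real k)"

lemma PP_0: "PP m 0 = 1" by (simp add: PP_def)

lemma PP_Suc: "PP m (Suc n) = PP m n * (2*(m+n)+1) * (2*(m+n)+2)"
proof -
  have e: "2*(m + Suc n) = Suc (Suc (2*(m+n)))" by simp
  show ?thesis unfolding PP_def e
    by (simp add: prod.cl_ivl_Suc algebra_simps)
qed

lemma PP_pos: "PP m n > 0"
  unfolding PP_def by (intro prod_pos) auto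

lemma len_W: "u \<in> W k \<Longrightarrow> length u = 2 * k"
  using len_AB[of u] by (simp add: W_def)

lemma main_trans:
  assumes "v \<in> W m" "w \<in> W (m + n)"
  shows "pmf (trans n v) w = real (sc w v) * (fact n * fact n) / PP m n"
  using assms(2)
proof (induction n arbitrary: w)
  case 0
  have "length w = length v" using len_W[OF assms(1)] len_W[OF 0] by simp
  then have "sc w v = (if w = v then 1 else 0)" by (rule sc_same)
  then show ?case by (simp add: trans_0 PP_0 indicator_def)
next
  case (Suc n)
  let ?L = "2 * (m + n)"
  have nA_v: "nA v = m" "nB v = m" using assms(1) by (auto simp: W_def)
  have nA_w: "nA w = Suc (m + n)" "nB w = Suc (m + n)" using Suc.prems by (auto simp: W_def)
  have "pmf (trans (Suc n) v) w = (\<integral>u. pmf (step u) w \<partial>measure_pmf (trans n v))"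
    by (simp add: trans_Suc pmf_bind)
  also have "\<dots> = (\<Sum>u\<in>W (m + n). pmf (step u) w * pmf (trans n v) u)"
    using set_trans[OF assms(1), of n] finite_Wc
    by (intro integral_measure_pmf_real) (auto simp: W_Wc)
  also have "\<dots> = (\<Sum>u\<in>W (m + n). real (sc w u * sc u v) * ((fact n * fact n) / (PP m n * ((?L + 1) * (?L + 2)))))"
  proof (rule sum.cong[OF refl])
    fix u assume u: "u \<in> W (m + n)"
    have lu: "length u = ?L" using len_W[OF u] .
    have "pmf (step u) w = sc w u / ((length u + 1) * (length u + 2))"
      using u nA_w by (intro pmf_step) (auto simp: W_def)
    then show "pmf (step u) w * pmf (trans n v) u = real (sc w u * sc u v) * ((fact n * fact n) / (PP m n * ((?L + 1) * (?L + 2))))"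
      using Suc.IH[OF u] lu by (simp add: field_simps)
  qed
  also have "\<dots> = real (\<Sum>u\<in>W (m + n). sc w u * sc u v) * ((fact n * fact n) / (PP m n * ((?L + 1) * (?L + 2))))"
    by (simp only: of_nat_sum sum_distrib_right)
  also have "(\<Sum>u\<in>W (m + n). sc w u * sc u v) = sc w v * (Suc n * Suc n)"
  proof -
    have "(\<Sum>u\<in>W (m + n). sc w u * sc u v) = (\<Sum>u\<in>Wc (nA v + n) (nB v + n). sc w u * sc u v)"
      using nA_v by (simp add: W_Wc)
    also have "\<dots> = sc w v * (nA w - nA v choose n) * (nB w - nB v choose n)" by (rule CI)
    also have "\<dots> = sc w v * (Suc n * Suc n)" using nA_v nA_w by (simp add: algebra_simps)
    finally show ?thesis .
  qed
  finally have r: "pmf (trans (Suc n) v) w = real (sc w v * (Suc n * Suc n)) * ((fact n * fact n) / (PP m n * ((?L + 1) * (?L + 2))))" .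
  have "PP m (Suc n) = PP m n * ((?L + 1) * (?L + 2))" by (simp add: PP_Suc algebra_simps)
  moreover have "(fact (Suc n) :: real) = Suc n * fact n" by (simp add: algebra_simps)
  ultimately show ?case using r by (simp add: field_simps)
qed



definition GG :: "word \<Rightarrow> word \<Rightarrow> (nat \<Rightarrow> nat) set" where
  "GG w v = {g :: nat \<Rightarrow> nat.
      (\<forall>k < length v. g k < length w \<and> w ! (g k) = v ! k) \<and>
      (\<forall>k. Suc k < length v \<longrightarrow> g k < g (Suc k)) \<and>
      (\<forall>k. length v \<le> k \<longrightarrow> g k = 0)}"

lemma subword_count_GG: "subword_count w v = card (GG w v)"
  by (simp add: subword_count_def GG_def)

definition sh :: "nat \<Rightarrow> (nat \<Rightarrow> nat) \<Rightarrow> nat \<Rightarrow> nat" where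
  "sh L h = (\<lambda>k. if k < L then Suc (h k) else 0)"

definition c0 :: "nat \<Rightarrow> (nat \<Rightarrow> nat) \<Rightarrow> nat \<Rightarrow> nat" where
  "c0 L h = (\<lambda>k. case k of 0 \<Rightarrow> 0 | Suc k' \<Rightarrow> if k' < L then Suc (h k') else 0)"

lemma GG_Nil2: "GG w [] = {\<lambda>_. 0}"
  by (auto simp: GG_def)

lemma GG_Nil1: "GG [] (y#v) = {}"
  by (auto simp: GG_def)

lemma G2_eq: "{g \<in> GG (x#w) (y#v). g 0 \<noteq> 0} = sh (Suc (length v)) ` GG w (y#v)"
proof (intro set_eqI iffI)
  fix g assume g: "g \<in> {g \<in> GG (x#w) (y#v). g 0 \<noteq> 0}"
  let ?L = "Suc (length v)"
  let ?h = "\<lambda>k. if k < ?L then g k - 1 else 0"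
  have G: "\<forall>k < ?L. g k < Suc (length w) \<and> (x#w) ! (g k) = (y#v) ! k"
     "\<forall>k. Suc k < ?L \<longrightarrow> g k < g (Suc k)" "\<forall>k. ?L \<le> k \<longrightarrow> g k = 0" "g 0 \<noteq> 0"
    using g by (auto simp: GG_def)
  have pos: "0 < g k" if "k < ?L" for k
  proof (cases k)
    case 0 then show ?thesis using G(4) by simp
  next
    case (Suc k') then have "g k' < g k" using G(2) that by auto
    then show ?thesis by simp
  qed
  have "?h \<in> GG w (y#v)"
    unfolding GG_def
  proof (intro CollectI conjI allI impI)
    fix k assume k: "k < length (y#v)"
    then have k': "k < ?L" by simp
    have gk: "g k = Suc (g k - 1)" using pos[OF k'] by simp
    show "?h k < length w" using G(1) k' gk by (metis Suc_less_SucD length_Cons)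
    have "(x#w) ! (g k) = w ! (g k - 1)" using gk by (metis nth_Cons_Suc)
    then show "w ! ?h k = (y#v) ! k" using G(1) k' by simp
  next
    fix k assume k: "Suc k < length (y#v)"
    then have "g k < g (Suc k)" using G(2) by simp
    moreover have "0 < g k" using pos k by simp
    ultimately show "?h k < ?h (Suc k)" using k by simp
  next
    fix k assume "length (y#v) \<le> k" then show "?h k = 0" by simp
  qed
  moreover have "g = sh ?L ?h"
  proof
    fix k show "g k = sh ?L ?h k"
      using pos[of k] G(3) by (cases "k < ?L") (auto simp: sh_def)
  qed
  ultimately show "g \<in> sh ?L ` GG w (y#v)" by blast
next
  fix g assume "g \<in> sh (Suc (length v)) ` GG w (y#v)"
  then obtain h where h: "h \<in> GG w (y#v)" and g: "g = sh (Suc (length v)) h" by blast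
  have H: "\<forall>k < Suc (length v). h k < length w \<and> w ! (h k) = (y#v) ! k"
     "\<forall>k. Suc k < Suc (length v) \<longrightarrow> h k < h (Suc k)"
    using h by (auto simp: GG_def)
  show "g \<in> {g \<in> GG (x#w) (y#v). g 0 \<noteq> 0}"
    using H unfolding g GG_def sh_def by auto
qed

lemma G1_eq: "{g \<in> GG (x#w) (y#v). g 0 = 0} = (if x = y then c0 (length v) ` GG w v else {})"
proof (intro set_eqI iffI)
  fix g assume g: "g \<in> {g \<in> GG (x#w) (y#v). g 0 = 0}"
  let ?L = "length v"
  let ?h = "\<lambda>k. if k < ?L then g (Suc k) - 1 else 0"
  have G: "\<forall>k < Suc ?L. g k < Suc (length w) \<and> (x#w) ! (g k) = (y#v) ! k"
     "\<forall>k. Suc k < Suc ?L \<longrightarrow> g k < g (Suc k)" "\<forall>k. Suc ?L \<le> k \<longrightarrow> g k = 0" "g 0 = 0"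
    using g by (auto simp: GG_def)
  have xy: "x = y" using G(1) G(4) by (metis nth_Cons_0 zero_less_Suc)
  have pos: "0 < g (Suc k)" if "k < ?L" for k
  proof -
    have "g k < g (Suc k)" using G(2) that by auto
    then show ?thesis by simp
  qed
  have "?h \<in> GG w v"
    unfolding GG_def
  proof (intro CollectI conjI allI impI)
    fix k assume k: "k < length v"
    have gk: "g (Suc k) = Suc (g (Suc k) - 1)" using pos[OF k] by simp
    show "?h k < length w" using G(1) k gk by (metis Suc_less_SucD Suc_mono)
    have "(x#w) ! (g (Suc k)) = w ! (g (Suc k) - 1)" using gk by (metis nth_Cons_Suc)
    then show "w ! ?h k = v ! k" using G(1) k by simp
  next
    fix k assume k: "Suc k < length v"
    then have "g (Suc k) < g (Suc (Suc k))" using G(2) by simp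
    moreover have "0 < g (Suc k)" using pos k by simp
    ultimately show "?h k < ?h (Suc k)" using k by simp
  next
    fix k assume "length v \<le> k" then show "?h k = 0" by simp
  qed
  moreover have "g = c0 ?L ?h"
  proof
    fix k show "g k = c0 ?L ?h k"
    proof (cases k)
      case 0 then show ?thesis using G(4) by (simp add: c0_def)
    next
      case (Suc k')
      then show ?thesis using pos[of k'] G(3) by (cases "k' < ?L") (auto simp: c0_def)
    qed
  qed
  ultimately show "g \<in> (if x = y then c0 (length v) ` GG w v else {})" using xy by auto
next
  fix g assume gi: "g \<in> (if x = y then c0 (length v) ` GG w v else {})"
  then have xy: "x = y" by (auto split: if_splits)
  then obtain h where h: "h \<in> GG w v" and g: "g = c0 (length v) h" using gi by auto
  have H: "\<forall>k < length v. h k < length w \<and> w ! (h k) = v ! k"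
     "\<forall>k. Suc k < length v \<longrightarrow> h k < h (Suc k)"
    using h by (auto simp: GG_def)
  have A1: "\<forall>k<length (y#v). g k < length (x#w) \<and> (x#w) ! (g k) = (y#v) ! k"
  proof (intro allI impI)
    fix k assume "k < length (y#v)"
    then show "g k < length (x#w) \<and> (x#w) ! (g k) = (y#v) ! k"
      using H xy by (cases k) (auto simp: g c0_def)
  qed
  have A2: "\<forall>k. Suc k < length (y#v) \<longrightarrow> g k < g (Suc k)"
  proof (intro allI impI)
    fix k assume "Suc k < length (y#v)"
    then show "g k < g (Suc k)"
      using H by (cases k) (auto simp: g c0_def)
  qed
  have A3: "\<forall>k. length (y#v) \<le> k \<longrightarrow> g k = 0"
    by (auto simp: g c0_def split: nat.splits)
  show "g \<in> {g \<in> GG (x#w) (y#v). g 0 = 0}"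
    using A1 A2 A3 by (simp add: GG_def g c0_def)
qed

lemma inj_sh: "inj_on (sh L) (GG w v)" if "length v = L"
proof (rule inj_onI)
  fix h1 h2 assume h: "h1 \<in> GG w v" "h2 \<in> GG w v" "sh L h1 = sh L h2"
  show "h1 = h2"
  proof
    fix k show "h1 k = h2 k"
    proof (cases "k < L")
      case True then show ?thesis using fun_cong[OF h(3), of k] by (simp add: sh_def)
    next
      case False then show ?thesis using h(1,2) that by (simp add: GG_def)
    qed
  qed
qed

lemma inj_c0: "inj_on (c0 L) (GG w v)" if "length v = L"
proof (rule inj_onI)
  fix h1 h2 assume h: "h1 \<in> GG w v" "h2 \<in> GG w v" "c0 L h1 = c0 L h2"
  show "h1 = h2"
  proof
    fix k show "h1 k = h2 k"
    proof (cases "k < L")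
      case True then show ?thesis using fun_cong[OF h(3), of "Suc k"] by (simp add: c0_def)
    next
      case False then show ?thesis using h(1,2) that by (simp add: GG_def)
    qed
  qed
qed

lemma GG_sc: "finite (GG w v) \<and> card (GG w v) = sc w v"
proof (induction w v rule: sc.induct)
  case (1 w) then show ?case by (simp add: GG_Nil2)
next
  case (2 y v) then show ?case by (simp add: GG_Nil1)
next
  case (3 x w y v)
  have split: "GG (x#w) (y#v) = {g \<in> GG (x#w) (y#v). g 0 = 0} \<union> {g \<in> GG (x#w) (y#v). g 0 \<noteq> 0}"
    by auto
  have f2: "finite (sh (Suc (length v)) ` GG w (y#v))" using 3 by simp
  have c2: "card (sh (Suc (length v)) ` GG w (y#v)) = sc w (y#v)"
    using 3 by (subst card_image) (auto intro: inj_sh)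
  have f1: "finite (if x = y then c0 (length v) ` GG w v else {})" using 3 by simp
  have c1: "card (if x = y then c0 (length v) ` GG w v else {}) = (if x = y then sc w v else 0)"
    using 3 by (auto simp: card_image inj_c0)
  have "GG (x#w) (y#v) = (if x = y then c0 (length v) ` GG w v else {}) \<union> sh (Suc (length v)) ` GG w (y#v)"
    using split by (simp only: G1_eq G2_eq)
  moreover have "(if x = y then c0 (length v) ` GG w v else {}) \<inter> sh (Suc (length v)) ` GG w (y#v) = {}"
    using G1_eq[of x w y v] G2_eq[of x w y v] by blast
  ultimately show ?case using f1 f2 c1 c2 by (simp add: card_Un_disjoint)
qed

lemma sw_sc: "subword_count w v = sc w v"
  using GG_sc subword_count_GG by simp



lemma pmf_joint: "pmf (joint m n) (v, w) = pmf (U m) v * pmf (trans n v) w"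
proof -
  have "pmf (joint m n) (v, w) = (\<integral>x. pmf (map_pmf (Pair x) (trans n x)) (v, w) \<partial>measure_pmf (U m))"
    by (simp add: joint_def pmf_bind)
  also have "\<dots> = (\<Sum>a\<in>{v}. pmf (map_pmf (Pair a) (trans n a)) (v, w) * pmf (U m) a)"
  proof (rule integral_measure_pmf_real)
    fix a assume "pmf (map_pmf (Pair a) (trans n a)) (v, w) \<noteq> 0"
    then have "(v, w) \<in> set_pmf (map_pmf (Pair a) (trans n a))" by (simp add: set_pmf_eq)
    then show "a \<in> {v}" by auto
  qed simp
  finally have j: "pmf (joint m n) (v, w) = pmf (map_pmf (Pair v) (trans n v)) (v, w) * pmf (U m) v" by simp
  have "pmf (map_pmf (Pair v) (trans n v)) (v, w) = pmf (trans n v) w"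
    by (rule pmf_map_inj') (auto simp: inj_def)
  then show ?thesis using j by simp
qed


theorem mainTheorem1:
  fixes m n :: nat and v w :: word
  assumes "v \<in> W m" and "w \<in> W (m + n)"
  shows "cond_prob m n v w =
    real (subword_count w v) * (fact n * fact n) / (\<Prod>k = 2*m+1..2*(m+n). real k)"
proof -
  have e0: "[] \<in> W 0" by (simp add: W_def)
  have v0: "v \<in> W (0 + m)" using assms(1) by simp
  have pU: "pmf (U m) v = real (sc v []) * (fact m * fact m) / PP 0 m"
    unfolding U_def by (rule main_trans[OF e0 v0])
  have "pmf (U m) v > 0" unfolding pU using PP_pos[of 0 m] by simp
  then have "cond_prob m n v w = pmf (trans n v) w"
    unfolding cond_prob_def pmf_joint by simp
  also have "\<dots> = real (sc w v) * (fact n * fact n) / PP m n"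
    by (rule main_trans[OF assms])
  finally show ?thesis by (simp add: PP_def sw_sc)
qed


end
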